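(* Let $\mu,h\ge2$ be integers. Put $X=\{0,1\}$, $n=h(h-1)\mu+1$, $A^*=\{x\in\mathbb{Z}_{\ge0}: x\bmod n\in\{\mu,h\mu\}\}$ and $A=A^*\cup X$. Then $\mu(A,X)=\mu$, $A^*=A\setminus X$ is an asymptotic basis with $G(A\setminus X)=h(h-1)\mu$, and $A$ is an asymptotic basis with $G(A)\le 2h+\mu-4$.
   Context: A set $A\subseteq\mathbb{Z}$ with $|A\cap\mathbb{Z}_{<0}|<\infty$ is an asymptotic basis if for some positive integer $h$ the $h$-fold sumset $hA=\{a_1+\dots+a_h: a_i\in A\}$ contains all but finitely many non-negative integers; the least such $h$ is the order $G(A)$. For a finite set $Y$ of integers, $\mathrm{diam}(Y)=\max Y-\min Y$, and for $X\subseteq A$ finite, $\mu(A,X)=\min_{y\in A\setminus X}\mathrm{diam}(X\cup\{y\})$. *)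

theory Defs
  imports Main
begin

definition sumset :: "nat \<Rightarrow> int set \<Rightarrow> int set" where
  "sumset h A = {sum_list xs | xs. length xs = h \<and> set xs \<subseteq> A}"

definition basis_of_order :: "int set \<Rightarrow> nat \<Rightarrow> bool" where
  "basis_of_order A h \<longleftrightarrow> 0 < h \<and> finite {m::int. 0 \<le> m \<and> m \<notin> sumset h A}"

definition asymptotic_basis :: "int set \<Rightarrow> bool" where
  "asymptotic_basis A \<longleftrightarrow> finite {a \<in> A. a < 0} \<and> (\<exists>h. basis_of_order A h)"

definition order_G :: "int set \<Rightarrow> nat" where
  "order_G A = (LEAST h. basis_of_order A h)"

definition diam :: "int set \<Rightarrow> int" where
  "diam Y = Max Y - Min Y"

definition mu_AX :: "int set \<Rightarrow> int set \<Rightarrow> int" where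
  "mu_AX A X = (LEAST d. \<exists>y \<in> A - X. d = diam (X \<union> {y}))"

end

theory Submission
  imports Defs
begin

lemma sumset_rep: "a \<in> B \<Longrightarrow> int k * a \<in> sumset k B"
  unfolding sumset_def
  by (rule CollectI, rule exI[of _ "replicate k a"]) (auto simp: sum_list_replicate)

lemma sumset_add: "x \<in> sumset k B \<Longrightarrow> y \<in> sumset l B \<Longrightarrow> x + y \<in> sumset (k+l) B"
  unfolding sumset_def
proof -
  assume "x \<in> {sum_list xs |xs. length xs = k \<and> set xs \<subseteq> B}"
    "y \<in> {sum_list xs |xs. length xs = l \<and> set xs \<subseteq> B}"
  then obtain xs ys where "x = sum_list xs" "length xs = k" "set xs \<subseteq> B"
    "y = sum_list ys" "length ys = l" "set ys \<subseteq> B" by blast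
  then show "x + y \<in> {sum_list xs |xs. length xs = k + l \<and> set xs \<subseteq> B}"
    by (intro CollectI exI[of _ "xs @ ys"]) auto
qed

lemma sumset_mono: "B \<subseteq> C \<Longrightarrow> sumset k B \<subseteq> sumset k C"
  unfolding sumset_def by blast

lemma sumset_shift1:
  assumes "\<forall>x\<in>B. x + d \<in> B" "x \<in> sumset k B" "0 < k"
  shows "x + d \<in> sumset k B"
proof -
  from assms(2) obtain xs where xs: "x = sum_list xs" "length xs = k" "set xs \<subseteq> B"
    unfolding sumset_def by blast
  then obtain y ys where "xs = y # ys" using assms(3) by (cases xs) auto
  with xs assms(1) show ?thesis unfolding sumset_def
    by (intro CollectI exI[of _ "(y + d) # ys"]) auto
qed

lemma sumset_shift:
  assumes "\<forall>x\<in>B. x + d \<in> B" "x \<in> sumset k B" "0 < k"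
  shows "x + int c * d \<in> sumset k B"
proof (induction c)
  case 0 then show ?case using assms by simp
next
  case (Suc c)
  have "x + int c * d + d \<in> sumset k B" by (rule sumset_shift1[OF assms(1) Suc assms(3)])
  then show ?case by (simp add: algebra_simps)
qed

lemma sumset_residue:
  fixes N p q :: int
  assumes "\<forall>x\<in>B. x mod N = p \<or> x mod N = q"
  shows "set xs \<subseteq> B \<Longrightarrow> \<exists>i\<le>length xs. sum_list xs mod N = (int i * p + int (length xs - i) * q) mod N"
proof (induction xs)
  case Nil then show ?case by simp
next
  case (Cons x xs)
  then obtain i where i: "i \<le> length xs"
    "sum_list xs mod N = (int i * p + int (length xs - i) * q) mod N" by auto
  have e: "sum_list (x # xs) mod N = (x mod N + sum_list xs mod N) mod N"
    by (simp add: mod_add_eq)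
  from Cons.prems assms have "x mod N = p \<or> x mod N = q" by auto
  then show ?case
  proof
    assume "x mod N = p"
    then have "sum_list (x # xs) mod N = (p + (int i * p + int (length xs - i) * q)) mod N"
      using e i by (simp add: mod_add_right_eq)
    also have "\<dots> = (int (Suc i) * p + int (length (x#xs) - Suc i) * q) mod N"
      by (simp add: algebra_simps)
    finally have "sum_list (x # xs) mod N = (int (Suc i) * p + int (length (x#xs) - Suc i) * q) mod N" .
    then show ?case using i(1) by (intro exI[of _ "Suc i"]) auto
  next
    assume "x mod N = q"
    have "int (length (x#xs) - i) = 1 + int (length xs - i)" using i(1) by simp
    have "sum_list (x # xs) mod N = (q + (int i * p + int (length xs - i) * q)) mod N"
      using e i \<open>x mod N = q\<close> by (simp add: mod_add_right_eq)
    also have "\<dots> = (int i * p + int (length (x#xs) - i) * q) mod N"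
      using \<open>int (length (x#xs) - i) = 1 + int (length xs - i)\<close> by (simp add: algebra_simps)
    finally have "sum_list (x # xs) mod N = (int i * p + int (length (x#xs) - i) * q) mod N" .
    then show ?case using i(1) by (intro exI[of _ i]) auto
  qed
qed

lemma sumset_residue':
  fixes N p q :: int
  assumes "\<forall>x\<in>B. x mod N = p \<or> x mod N = q" "y \<in> sumset k B"
  shows "\<exists>i\<le>k. y mod N = (int i * p + int (k - i) * q) mod N"
  using assms(2) sumset_residue[OF assms(1)] unfolding sumset_def by blast

lemma finite_missing:
  fixes S :: "int set"
  assumes "\<forall>m\<ge>M. m \<in> S"
  shows "finite {m. 0 \<le> m \<and> m \<notin> S}"
proof -
  have "{m. 0 \<le> m \<and> m \<notin> S} \<subseteq> {0..M}"
  proof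
    fix m assume "m \<in> {m. 0 \<le> m \<and> m \<notin> S}"
    then have "0 \<le> m" "\<not> m \<ge> M" using assms by auto
    then show "m \<in> {0..M}" by simp
  qed
  then show ?thesis using finite_subset by blast
qed

lemma diam01: "(y::int) \<ge> 1 \<Longrightarrow> diam ({0,1} \<union> {y}) = y"
  unfolding diam_def by (simp add: insert_commute max_def min_def)


lemma cover:
  fixes \<mu> h r :: nat
  assumes "\<mu> \<ge> 2" "h \<ge> 2" "r < h*(h-1)*\<mu>+1"
  shows "\<exists>a b t. 1 \<le> a+b \<and> a+b+t \<le> 2*h+\<mu>-4 \<and> (a*\<mu> + b*(h*\<mu>) + t) mod (h*(h-1)*\<mu>+1) = r"
proof -
  define n where "n = h*(h-1)*\<mu>+1"
  have hh: "(h-1)*(h*\<mu>) = h*(h-1)*\<mu>" by (simp add: mult_ac)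
  consider "r \<ge> \<mu>" | "r < \<mu> - 1" | "r = \<mu> - 1" by linarith
  then show ?thesis
  proof cases
    case 1
    define q where "q = r div \<mu>"
    define t where "t = r mod \<mu>"
    define b where "b = q div h"
    define a where "a = q mod h"
    have r: "r = q*\<mu> + t" unfolding q_def t_def by simp
    have q: "q = b*h + a" unfolding a_def b_def by simp
    have sum: "a*\<mu> + b*(h*\<mu>) + t = r" using r q by (simp add: algebra_simps)
    have "r \<le> h*(h-1)*\<mu>" using assms(3) by simp
    then have "q*\<mu> \<le> h*(h-1)*\<mu>" using r by linarith
    then have qle: "q \<le> h*(h-1)" using assms(1) by (simp only: mult_le_cancel2)
    have q1: "q \<ge> 1" unfolding q_def using 1 assms(1)
      by (metis div_le_mono div_self not_numeral_le_zero)
    have ah: "a \<le> h - 1" unfolding a_def using assms(2)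
      by (metis Suc_pred' less_Suc_eq_le mod_less_divisor not_numeral_le_zero not_gr_zero)
    have "b \<le> h*(h-1) div h" unfolding b_def using qle div_le_mono by blast
    then have bh: "b \<le> h - 1" using assms(2) by simp
    have ab: "a + b \<le> 2*h - 3"
    proof (cases "b = h - 1")
      case True
      then have "(h-1)*h + a \<le> h*(h-1)" using q qle by simp
      then have "a = 0" by (simp add: mult.commute)
      then show ?thesis using True assms(2) by simp
    next
      case False
      then show ?thesis using ah bh assms(2) by linarith
    qed
    have tl: "t \<le> \<mu> - 1" unfolding t_def using assms(1)
      by (metis Suc_pred' less_Suc_eq_le mod_less_divisor not_numeral_le_zero not_gr_zero)
    have "1 \<le> a + b" using q q1 by (cases "a + b = 0") auto
    moreover have "a+b+t \<le> 2*h+\<mu>-4" using ab tl assms by linarith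
    moreover have "(a*\<mu> + b*(h*\<mu>) + t) mod n = r" using sum assms(3) n_def by simp
    ultimately show ?thesis unfolding n_def by blast
  next
    case 2
    have e: "(0*\<mu> + (h-1)*(h*\<mu>) + (r+1)) = n + r" using hh n_def by simp
    have "r < n" using assms(3) n_def by simp
    then have "(n + r) mod n = r" by simp
    then have "(0*\<mu> + (h-1)*(h*\<mu>) + (r+1)) mod n = r" by (simp only: e)
    moreover have "1 \<le> 0 + (h-1)" "0 + (h-1) + (r+1) \<le> 2*h+\<mu>-4" using 2 assms by linarith+
    ultimately show ?thesis unfolding n_def by blast
  next
    case 3
    have e: "(1*\<mu> + (h-1)*(h*\<mu>) + 0) = n + r" using hh n_def 3 assms(1) by simp
    have "r < n" using assms(3) n_def by simp
    then have "(n + r) mod n = r" by simp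
    then have "(1*\<mu> + (h-1)*(h*\<mu>) + 0) mod n = r" by (simp only: e)
    moreover have "1 \<le> 1 + (h-1)" "1 + (h-1) + 0 \<le> 2*h+\<mu>-4" using 3 assms by linarith+
    ultimately show ?thesis unfolding n_def by blast
  qed
qed


theorem mainTheorem8:
  fixes \<mu> h :: nat
  assumes "\<mu> \<ge> 2" and "h \<ge> 2"
  defines "n \<equiv> h * (h - 1) * \<mu> + 1"
  defines "Astar \<equiv> {x::int. 0 \<le> x \<and> x mod int n \<in> {int \<mu>, int (h * \<mu>)}}"
  defines "A \<equiv> Astar \<union> {0, 1}"
  shows "mu_AX A {0, 1} = int \<mu>
    \<and> Astar = A - {0, 1}
    \<and> asymptotic_basis (A - {0, 1})
    \<and> order_G (A - {0, 1}) = h * (h - 1) * \<mu>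
    \<and> asymptotic_basis A
    \<and> order_G A \<le> 2 * h + \<mu> - 4"
proof -
  define H where "H = h*(h-1)*\<mu>"
  have nH: "n = H + 1" using n_def H_def by simp
  define N where "N = int n"
  define c where "c = (h-1)*\<mu>"
  have cc: "int c = int h * int \<mu> - int \<mu>" unfolding c_def using assms(2)
    by (simp add: of_nat_diff algebra_simps)
  have Hc: "H = h * c" unfolding H_def c_def by simp
  have c1: "c \<ge> \<mu>"
  proof -
    have "1*\<mu> \<le> (h-1)*\<mu>" using assms(2) by (intro mult_le_mono1) simp
    then show ?thesis unfolding c_def by simp
  qed
  have Hge: "H \<ge> h*\<mu>" using Hc c1 by simp
  have H2: "H \<ge> 2"
  proof -
    have "2*2 \<le> h*\<mu>" using assms(1) assms(2) by (intro mult_le_mono) auto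
    then show ?thesis using Hge by simp
  qed
  have NH: "N = int H + 1" unfolding N_def nH by simp
  have mhm: "\<mu> \<le> h*\<mu>" using assms(2) by simp
  have muN: "int \<mu> < N" "int (h*\<mu>) < N" "int \<mu> \<le> int (h*\<mu>)" 
  proof -
    have i1: "int \<mu> \<le> int (h*\<mu>)" using mhm by (simp only: of_nat_le_iff)
    have i2: "int (h*\<mu>) \<le> int H" using Hge by (simp only: of_nat_le_iff)
    show "int \<mu> < N" "int (h*\<mu>) < N" "int \<mu> \<le> int (h*\<mu>)" using i1 i2 NH by linarith+
  qed
  have Npos: "N > 1" using muN assms(1) assms(2) by linarith
  have res: "\<forall>x\<in>Astar. x mod N = int \<mu> \<or> x mod N = int (h*\<mu>)"
    unfolding Astar_def N_def by auto
  have clos: "\<forall>x\<in>Astar. x + N \<in> Astar" unfolding Astar_def N_def by auto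
  have muA: "int \<mu> \<in> Astar" using muN unfolding Astar_def N_def by simp
  have hmuA: "int (h*\<mu>) \<in> Astar" using muN unfolding Astar_def N_def by simp
  have hm4: "4 \<le> h*\<mu>" using assms(1) assms(2) mult_le_mono[of 2 h 2 \<mu>] by simp
  then have hm4': "4 \<le> int h * int \<mu>" by (metis of_nat_le_iff of_nat_mult of_nat_numeral)
  have notin: "0 \<notin> Astar" "1 \<notin> Astar" using assms(1) assms(2) muN Npos hm4' unfolding Astar_def N_def by auto
  have eq1: "Astar = A - {0,1}" using notin A_def by auto
  have gemu: "y \<ge> int \<mu>" if "y \<in> Astar" for y
  proof -
    have "y mod N \<le> y" using that unfolding Astar_def N_def by (simp add: zmod_le_nonneg_dividend)
    moreover have "y mod N \<ge> int \<mu>" using res that muN by auto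
    ultimately show ?thesis by simp
  qed
  have part1: "mu_AX A {0, 1} = int \<mu>"
    unfolding mu_AX_def
  proof (rule Least_equality)
    show "\<exists>y\<in>A - {0, 1}. int \<mu> = diam ({0, 1} \<union> {y})"
      using muA eq1 diam01[of "int \<mu>"] assms(1) assms(2) by force
  next
    fix d assume "\<exists>y\<in>A - {0, 1}. d = diam ({0, 1} \<union> {y})"
    then obtain y where y: "y \<in> Astar" "d = diam ({0, 1} \<union> {y})" using eq1 by blast
    then have "y \<ge> int \<mu>" using gemu by blast
    then show "int \<mu> \<le> d" using y diam01[of y] assms(1) assms(2) by simp
  qed
  define f where "f i = (int i * int \<mu> + int (H - i) * int (h*\<mu>)) mod N" for i
  have fe: "int i * int \<mu> + int (H - i) * int (h*\<mu>) = int H * int (h*\<mu>) - int i * int c"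
    if "i \<le> H" for i
  proof -
    have cc': "int (h*\<mu>) = int \<mu> + int c" using cc by simp
    show ?thesis unfolding cc' of_nat_diff[OF that] by (simp add: algebra_simps)
  qed
  have cop: "coprime N (int c)"
  proof (rule coprimeI)
    fix d assume "d dvd N" "d dvd int c"
    then have "d dvd N - int h * int c" by simp
    moreover have "N - int h * int c = 1" unfolding N_def using nH Hc by simp
    ultimately show "is_unit d" by simp
  qed
  have finj: "inj_on f {0..H}"
  proof (rule inj_onI)
    fix i j assume i: "i \<in> {0..H}" and j: "j \<in> {0..H}" and fij: "f i = f j"
    have "N dvd (int H * int (h*\<mu>) - int i * int c) - (int H * int (h*\<mu>) - int j * int c)"
    proof -
      have hi: "i \<le> H" and hj: "j \<le> H" using i j by auto
      have "(int H * int (h*\<mu>) - int i * int c) mod N = (int H * int (h*\<mu>) - int j * int c) mod N"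
        using fij unfolding f_def fe[OF hi] fe[OF hj] .
      then show ?thesis by (simp only: mod_eq_dvd_iff)
    qed
    also have "(int H * int (h*\<mu>) - int i * int c) - (int H * int (h*\<mu>) - int j * int c) = (int j - int i) * int c"
      by (simp add: algebra_simps)
    finally have "N dvd int j - int i" using cop by (simp add: coprime_dvd_mult_left_iff)
    show "i = j"
    proof (rule ccontr)
      assume "i \<noteq> j"
      then have "\<bar>N\<bar> \<le> \<bar>int j - int i\<bar>" using \<open>N dvd int j - int i\<close> dvd_imp_le_int by auto
      moreover have "\<bar>int j - int i\<bar> < N" using i j nH N_def by auto
      ultimately show False by simp
    qed
  qed
  have fimg: "f ` {0..H} = {0..<N}"
  proof (rule card_subset_eq)
    show "finite {0..<N}" by simp
    show "f ` {0..H} \<subseteq> {0..<N}" unfolding f_def using Npos by auto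
    have "card (f ` {0..H}) = H + 1" using finj by (simp add: card_image)
    then show "card (f ` {0..H}) = card {0..<N}" using nH N_def by simp
  qed
  have basisH: "basis_of_order Astar H"
    unfolding basis_of_order_def
  proof
    show "0 < H" using H2 by simp
    show "finite {m. 0 \<le> m \<and> m \<notin> sumset H Astar}"
    proof (rule finite_missing[of "int H * int (h*\<mu>)"], intro allI impI)
      fix m :: int assume mge: "int H * int (h*\<mu>) \<le> m"
      have "m mod N \<in> {0..<N}" using Npos by simp
      then obtain i where i: "i \<in> {0..H}" "f i = m mod N" using fimg by (metis imageE)
      define s where "s = int i * int \<mu> + int (H - i) * int (h*\<mu>)"
      have "int i * int \<mu> \<in> sumset i Astar" using sumset_rep[OF muA] by simp
      moreover have "int (H-i) * int (h*\<mu>) \<in> sumset (H-i) Astar" using sumset_rep[OF hmuA] by simp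
      ultimately have "s \<in> sumset (i + (H-i)) Astar" unfolding s_def by (rule sumset_add)
      then have sS: "s \<in> sumset H Astar" using i by simp
      have "int i * int \<mu> \<le> int i * int (h*\<mu>)" using muN by (simp add: mult_left_mono)
      then have "s \<le> int H * int (h*\<mu>)" unfolding s_def using i fe
        by (simp add: of_nat_diff algebra_simps)
      then have sm: "0 \<le> m - s" using mge by simp
      have "s mod N = m mod N" using i unfolding s_def f_def by simp
      then have "N dvd m - s" by (metis mod_eq_dvd_iff dvd_diff_commute)
      then obtain q where q: "m - s = N * q" by (elim dvdE)
      have "q \<ge> 0" using q sm Npos by (metis linorder_not_le mult_less_0_iff not_one_less_zero order_less_trans zero_less_one)
      then have "m = s + int (nat q) * N" using q by (simp add: algebra_simps)
      moreover have "s + int (nat q) * N \<in> sumset H Astar"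
        proof -
        have "0 < H" using H2 by simp
        then show ?thesis using sumset_shift[OF clos sS] by blast
      qed
      ultimately show "m \<in> sumset H Astar" by simp
    qed
  qed
  have lower: "H \<le> k" if bk: "basis_of_order Astar k" for k
  proof (rule ccontr)
    assume "\<not> H \<le> k"
    then have kH: "k < H" by simp
    have k0: "0 < k" using bk unfolding basis_of_order_def by simp
    have fin: "finite {m. 0 \<le> m \<and> m \<notin> sumset k Astar}" using bk unfolding basis_of_order_def by simp
    define g where "g i = (int i * int \<mu> + int (k - i) * int (h*\<mu>)) mod N" for i
    define R where "R = g ` {0..k}"
    have "card R \<le> k + 1" unfolding R_def using card_image_le[of "{0..k}" g] by simp
    then have "card R < card {0..<N}" using kH nH N_def by simp
    then have "\<not> {0..<N} \<subseteq> R" using card_mono[of R "{0..<N}"] unfolding R_def by (meson card_mono finite_atLeastAtMost finite_imageI not_le)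
    then obtain d where d: "d \<in> {0..<N}" "d \<notin> R" by blast
    define e where "e j = d + N * int j" for j
    have "inj e" unfolding e_def inj_def using Npos by simp
    then have inf: "infinite (range e)" using finite_imageD infinite_UNIV_nat by blast
    have "range e \<subseteq> {m. 0 \<le> m \<and> m \<notin> sumset k Astar}"
    proof
      fix y assume "y \<in> range e"
      then obtain j where y: "y = e j" by blast
      have ymod: "y mod N = d" using y d unfolding e_def by simp
      have "0 \<le> y" using y d Npos unfolding e_def by simp
      moreover have "y \<notin> sumset k Astar"
      proof
        assume "y \<in> sumset k Astar"
        then obtain i where "i \<le> k" "y mod N = g i" using sumset_residue'[OF res] unfolding g_def by blast
        then have "d \<in> R" using ymod unfolding R_def by auto
        then show False using d by simp
      qed
      ultimately show "y \<in> {m. 0 \<le> m \<and> m \<notin> sumset k Astar}" by simp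
    qed
    then show False using inf fin finite_subset by blast
  qed
  have ordH: "order_G Astar = H" unfolding order_G_def
    by (rule Least_equality) (use basisH lower in auto)
  define K where "K = 2*h + \<mu> - 4"
  have basisK: "basis_of_order A K"
    unfolding basis_of_order_def
  proof
    show "0 < K" unfolding K_def using assms(1) assms(2) by simp
    show "finite {m. 0 \<le> m \<and> m \<notin> sumset K A}"
    proof (rule finite_missing[of "int (K * (h*\<mu>) + K)"], intro allI impI)
      fix m :: int assume mge: "int (K * (h*\<mu>) + K) \<le> m"
      define r where "r = nat (m mod N)"
      have m0: "0 \<le> m mod N" "m mod N < N" using Npos by simp_all
      have rN2: "int r = m mod N" unfolding r_def using m0 by simp
      have "int r < int n" using rN2 m0 N_def by simp
      then have "r < n" by simp
      then have rN1: "r < h*(h-1)*\<mu>+1" unfolding n_def .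
      note rN = rN1 rN2
      obtain a b t where abt: "1 \<le> a+b" "a+b+t \<le> K" "(a*\<mu> + b*(h*\<mu>) + t) mod (h*(h-1)*\<mu>+1) = r"
        using cover[OF assms(1) assms(2) rN(1)] unfolding K_def by blast
      define s0 where "s0 = int a * int \<mu> + int b * int (h*\<mu>)"
      define s where "s = s0 + int t"
      have "int ((a*\<mu> + b*(h*\<mu>) + t) mod (h*(h-1)*\<mu>+1)) = s mod N"
        unfolding s_def s0_def N_def n_def by (simp add: of_nat_mod)
      then have smod: "s mod N = m mod N" using abt(3) rN(2) by simp
      have "a*\<mu> \<le> a*(h*\<mu>)" using assms(1) assms(2) by simp
      then have "a*\<mu> + b*(h*\<mu>) \<le> (a+b)*(h*\<mu>)" by (simp add: algebra_simps)
      also have "\<dots> \<le> K*(h*\<mu>)" using abt(2) by (simp add: mult_right_mono)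
      finally have "a*\<mu> + b*(h*\<mu>) + t \<le> K * (h*\<mu>) + K" using abt(2) by simp
      then have "s \<le> int (K * (h*\<mu>) + K)" unfolding s_def s0_def
        by (metis of_nat_add of_nat_le_iff of_nat_mult)
      then have sm: "0 \<le> m - s" using mge by simp
      have "N dvd m - s" using smod by (metis mod_eq_dvd_iff dvd_diff_commute)
      then obtain q where q: "m - s = N * q" by (elim dvdE)
      have "q \<ge> 0" using q sm Npos by (metis linorder_not_le mult_less_0_iff not_one_less_zero order_less_trans zero_less_one)
      then have meq: "m = (s0 + int (nat q) * N) + int t * 1 + int (K - (a+b) - t) * 0" using q s_def by (simp add: algebra_simps)
      have "int a * int \<mu> \<in> sumset a Astar" using sumset_rep[OF muA] by simp
      moreover have "int b * int (h*\<mu>) \<in> sumset b Astar" using sumset_rep[OF hmuA] by simp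
      ultimately have "s0 \<in> sumset (a+b) Astar" unfolding s0_def by (rule sumset_add)
      moreover have "0 < a + b" using abt(1) by linarith
      ultimately have "s0 + int (nat q) * N \<in> sumset (a+b) Astar" using sumset_shift[OF clos] by blast
      then have x1: "s0 + int (nat q) * N \<in> sumset (a+b) A" using sumset_mono[of Astar A] A_def by blast
      have x2: "int t * 1 \<in> sumset t A" by (rule sumset_rep) (simp add: A_def)
      have x3: "int (K - (a+b) - t) * 0 \<in> sumset (K - (a+b) - t) A" by (rule sumset_rep) (simp add: A_def)
      have "m \<in> sumset ((a+b) + t + (K - (a+b) - t)) A"
        unfolding meq by (intro sumset_add x1 x2 x3)
      then show "m \<in> sumset K A" using abt(2) by simp
    qed
  qed
  have negA: "{a \<in> A. a < 0} = {}" unfolding A_def Astar_def by auto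
  have negAs: "{a \<in> A - {0,1}. a < 0} = {}" using negA by auto
  have ordK: "order_G A \<le> K" unfolding order_G_def by (rule Least_le) (rule basisK)
  have ab1: "asymptotic_basis (A - {0,1})" unfolding asymptotic_basis_def
    using negAs eq1 basisH by (metis finite.emptyI)
  have ab2: "asymptotic_basis A" unfolding asymptotic_basis_def
    using negA basisK by (metis finite.emptyI)
  show ?thesis
    using part1 eq1 ab1 ab2 ordH ordK unfolding K_def H_def by simp
qed

end
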